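(* For fixed $a$ and $\lambda \rightarrow \infty$ with $|\arg(\lambda)| \leq \frac{1}{2}\pi - \delta$ \[ L_{W}^{\pm}(a,\lambda) \sim\frac{W(a,0)}{\lambda}\sum_{ s=0}^{\infty} \frac{\alpha_{s}(a)}{\lambda^{2s}}\pm \frac{W'(a,0)}{\lambda^{2}}\sum_{ s=0}^{\infty} \frac{\beta_{s}(a)}{\lambda^{2s}}, \] where $\alpha_{0}(a)=\beta_{0}(a)=1$, $\alpha_{1}(a)=\beta_{1}(a)=a$, and for $ s=0,1,2,\ldots$ \[ \alpha_{s+2}=a\alpha_{s+1}-\tfrac{1}{2}(s+1)(2s+1)\alpha_{s},\qquad \beta_{s+2}=a\beta_{s+1}-\tfrac{1}{2}(s+1)(2s+3)\beta_{s}, \] and \[ W\left(a,0\right)=2^{-3/4}\left|\frac{\Gamma\left(\tfrac{1}{4}+\tfrac{1}{2}ia\right)}{\Gamma\left(\tfrac{3}{4}+\tfrac{1}{2}ia\right)}\right|^{1/2},\quad W'\left(a,0\right)=-2^{-1/4}\left|\frac{\Gamma\left(\tfrac{3}{4}+\tfrac{1}{2}ia\right)}{\Gamma\left(\tfrac{1}{4}+\tfrac{1}{2}ia\right)}\right|^{1/2}. \]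
   Context: $a$ is real; $W(a,\pm t)$ are the Weber parabolic cylinder functions (DLMF Sect. 12.14), solutions of $y''+(\tfrac14 t^2-a)y=0$. $L_{W}^{\pm}(a,\lambda)=\int_{0}^{\infty} e^{-\lambda t} W(a,\pm t)dt$ for $|\arg\lambda|\le\tfrac12\pi$. $\delta$ denotes an arbitrary small positive constant. *)

theory Defs
  imports "HOL-Analysis.Analysis"
begin

fun weber_alpha :: "real \<Rightarrow> nat \<Rightarrow> real" where
  "weber_alpha a 0 = 1"
| "weber_alpha a (Suc 0) = a"
| "weber_alpha a (Suc (Suc s)) =
     a * weber_alpha a (Suc s) - (1/2) * (real s + 1) * (2 * real s + 1) * weber_alpha a s"

fun weber_beta :: "real \<Rightarrow> nat \<Rightarrow> real" where
  "weber_beta a 0 = 1"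
| "weber_beta a (Suc 0) = a"
| "weber_beta a (Suc (Suc s)) =
     a * weber_beta a (Suc s) - (1/2) * (real s + 1) * (2 * real s + 3) * weber_beta a s"

text \<open>Initial values W(a,0) and W'(a,0) (DLMF 12.14.2, 12.14.3).\<close>
definition W0 :: "real \<Rightarrow> real" where
  "W0 a = 2 powr (-3/4) *
     sqrt (norm (Gamma (1/4 + \<i> * complex_of_real (a/2)) / Gamma (3/4 + \<i> * complex_of_real (a/2))))"

definition W0' :: "real \<Rightarrow> real" where
  "W0' a = - (2 powr (-1/4) *
     sqrt (norm (Gamma (3/4 + \<i> * complex_of_real (a/2)) / Gamma (1/4 + \<i> * complex_of_real (a/2)))))"

text \<open>w is the Weber function W(a,.) with derivative w': the unique solution of
  y'' + (t^2/4 - a) y = 0 on the real line with y(0) = W(a,0), y'(0) = W'(a,0).\<close>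
definition is_weber_W :: "real \<Rightarrow> (real \<Rightarrow> real) \<Rightarrow> (real \<Rightarrow> real) \<Rightarrow> bool" where
  "is_weber_W a w w' \<longleftrightarrow>
     (\<forall>t. (w has_real_derivative w' t) (at t) \<and>
          (w' has_real_derivative ((a - t\<^sup>2 / 4) * w t)) (at t)) \<and>
     w 0 = W0 a \<and> w' 0 = W0' a"

text \<open>Laplace transform L_W^{\<sigma>}(a,\<lambda>), \<sigma> = 1 or -1.\<close>
definition weber_laplace :: "(real \<Rightarrow> real) \<Rightarrow> real \<Rightarrow> complex \<Rightarrow> complex" where
  "weber_laplace w \<sigma> z = integral {0..} (\<lambda>t. exp (- z * complex_of_real t) * complex_of_real (w (\<sigma> * t)))"

end

theory Submission
  imports Defs
begin


lemma poly_exp_bound: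
  assumes c: "c > 0"
  shows "\<exists>B>0. \<forall>t\<ge>0. (1 + t::real) ^ m \<le> B * exp (c * t)"
proof (cases "m = 0")
  case True thus ?thesis using c by (intro exI[of _ 1]) auto
next
  case False
  define d where "d = min 1 (c / real m)"
  have d: "d > 0" using c False by (simp add: d_def)
  have "(1 + t) ^ m \<le> (1/d^m) * exp (c * t)" if t: "t \<ge> 0" for t
  proof -
    have "d * (1 + t) \<le> 1 + (c*t) / real m"
    proof -
      have "d \<le> 1" "d \<le> c / real m" by (auto simp: d_def)
      hence "d * t \<le> c / real m * t" using mult_right_mono[OF \<open>d \<le> c / real m\<close> t] by simp
      thus ?thesis using \<open>d \<le> 1\<close> by (simp add: algebra_simps)
    qed
    hence "(d * (1 + t)) ^ m \<le> (1 + (c*t) / real m) ^ m"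
      using d t by (intro power_mono) auto
    also have "\<dots> \<le> exp (c*t)"
    proof -
      have "0 \<le> c*t" using t c by simp
      hence "- real m \<le> c*t" by linarith
      thus ?thesis using False by (intro exp_ge_one_plus_x_over_n_power_n) auto
    qed
    finally have "d^m * (1+t)^m \<le> exp (c*t)" by (simp add: power_mult_distrib)
    thus ?thesis using d by (simp add: field_simps)
  qed
  thus ?thesis using d by (intro exI[of _ "1/d^m"]) auto
qed

lemma lap_int:
  fixes g :: "real \<Rightarrow> real"
  assumes cont: "continuous_on {0..} g" and bd: "\<And>t. t \<ge> 0 \<Longrightarrow> \<bar>g t\<bar> \<le> C*(1+t)^m"
    and c0: "c0 > 0"
  shows "\<exists>K. \<forall>z. Re z \<ge> c0 \<longrightarrow>
     (\<lambda>t. exp (- z * complex_of_real t) * complex_of_real (g t)) integrable_on {0..} \<and>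
     norm (integral {0..} (\<lambda>t. exp (- z * complex_of_real t) * complex_of_real (g t))) \<le> K"
proof -
  obtain B where B: "B > 0" "\<And>t. t \<ge> 0 \<Longrightarrow> (1+t)^m \<le> B * exp ((c0/2) * t)"
    using poly_exp_bound[of "c0/2" m] c0 by auto
  have C: "C \<ge> 0" using bd[of 0] by auto
  define h where "h = (\<lambda>t. C * B * exp (- (c0/2) * t))"
  have hint: "(h has_integral C * B * (2/c0)) {0..}"
    unfolding h_def using has_integral_exp_minus_to_infinity[of "c0/2" 0] c0
    by (intro has_integral_mult_right) auto
  have "(\<lambda>t. exp (- z * complex_of_real t) * complex_of_real (g t)) integrable_on {0..} \<and>
     norm (integral {0..} (\<lambda>t. exp (- z * complex_of_real t) * complex_of_real (g t))) \<le> C * B * (2/c0)"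
    if z: "Re z \<ge> c0" for z
  proof -
    let ?f = "\<lambda>t. exp (- z * complex_of_real t) * complex_of_real (g t)"
    have le: "norm (?f t) \<le> h t" if t: "t \<in> {0..}" for t
    proof -
      have "norm (?f t) = exp (- Re z * t) * \<bar>g t\<bar>"
        by (simp add: norm_mult norm_exp_eq_Re)
      also have "\<dots> \<le> exp (- c0 * t) * (C * (1+t)^m)"
        using t z bd[of t] by (intro mult_mono) (auto simp: mult_right_mono)
      also have "\<dots> \<le> exp (- c0 * t) * (C * (B * exp ((c0/2) * t)))"
        using t B(2)[of t] C by (intro mult_left_mono) auto
      also have "\<dots> = h t"
      proof -
        have "exp (- c0 * t) * exp ((c0/2) * t) = exp (- (c0/2) * t)"
          by (simp add: exp_add[symmetric])
        thus ?thesis by (simp add: h_def algebra_simps)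
      qed
      finally show ?thesis .
    qed
    have meas: "?f \<in> borel_measurable (lebesgue_on {0..})"
      by (intro continuous_imp_measurable_on_sets_lebesgue continuous_intros cont) auto
    have fint: "?f integrable_on {0..}"
      by (rule measurable_bounded_by_integrable_imp_integrable[OF meas _ le])
         (use hint in auto)
    have "norm (integral {0..} ?f) \<le> integral {0..} h"
      by (rule integral_norm_bound_integral[OF fint _ le]) (use hint in auto)
    also have "\<dots> = C * B * (2/c0)" using hint by (simp add: has_integral_iff)
    finally show ?thesis using fint by auto
  qed
  thus ?thesis by blast
qed

definition lap :: "(real \<Rightarrow> real) \<Rightarrow> complex \<Rightarrow> complex" where
  "lap g z = integral {0..} (\<lambda>t. exp (- z * complex_of_real t) * complex_of_real (g t))"

lemma lap_ibp:
  fixes g g' :: "real \<Rightarrow> real"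
  assumes deriv: "\<And>t. (g has_real_derivative g' t) (at t)"
    and cont': "continuous_on {0..} g'"
    and bd: "\<And>t. t\<ge>0 \<Longrightarrow> \<bar>g t\<bar> \<le> C*(1+t)^m" and bd': "\<And>t. t\<ge>0 \<Longrightarrow> \<bar>g' t\<bar> \<le> C*(1+t)^m"
    and z: "Re z > 0"
  shows "lap g' z = z * lap g z - complex_of_real (g 0)"
proof -
  define c where "c = Re z / 2"
  have c: "c > 0" using z by (simp add: c_def)
  obtain B where B: "B>0" "\<And>t. t\<ge>0 \<Longrightarrow> (1+t)^m \<le> B*exp(c*t)"
    using poly_exp_bound[OF c] by blast
  have C: "C \<ge> 0" using bd[of 0] by auto
  define E where "E = (\<lambda>t. exp (- z * complex_of_real t))"
  define h where "h = (\<lambda>t. C * B * exp (- c * t))"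
  have hint: "h integrable_on {0..}"
    unfolding h_def integrable_on_def
    using has_integral_mult_right[OF has_integral_exp_minus_to_infinity[OF c, of 0], of "C*B"] by auto
  have dom: "norm (E t * complex_of_real (f t)) \<le> h t"
    if t: "t \<ge> 0" and bdf: "\<And>t. t\<ge>0 \<Longrightarrow> \<bar>f t\<bar> \<le> C*(1+t)^m" for t and f :: "real \<Rightarrow> real"
  proof -
    have "norm (E t * complex_of_real (f t)) = exp (- Re z * t) * \<bar>f t\<bar>"
      by (simp add: E_def norm_mult norm_exp_eq_Re)
    also have "\<dots> \<le> exp (- (2*c) * t) * (C * (1+t)^m)"
      using t bdf[of t] by (intro mult_mono) (auto simp: c_def)
    also have "\<dots> \<le> exp (- (2*c) * t) * (C * (B * exp (c * t)))"
      using t B(2)[of t] C by (intro mult_left_mono) auto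
    also have "\<dots> = h t"
    proof -
      have "exp (- (2*c) * t) * exp (c * t) = exp (- c * t)"
        by (simp add: exp_add[symmetric])
      thus ?thesis by (simp add: h_def algebra_simps)
    qed
    finally show ?thesis .
  qed
  have contg: "continuous_on {0..} g"
    using deriv by (intro continuous_at_imp_continuous_on ballI DERIV_isCont) auto
  have lim: "(\<lambda>k. integral {0..real k} (\<lambda>t. E t * complex_of_real (f t))) \<longlonglongrightarrow> lap f z"
    if bdf: "\<And>t. t\<ge>0 \<Longrightarrow> \<bar>f t\<bar> \<le> C*(1+t)^m" and cf: "continuous_on {0..} f"
    for f :: "real \<Rightarrow> real"
  proof -
    define fk where "fk = (\<lambda>k t. if t \<in> {0..real k} then E t * complex_of_real (f t) else 0)"
    have cont: "continuous_on {0..real k} (\<lambda>t. E t * complex_of_real (f t))" for k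
      unfolding E_def by (intro continuous_intros continuous_on_subset[OF cf]) auto
    have fk: "(fk k has_integral integral {0..real k} (\<lambda>t. E t * complex_of_real (f t))) {0..}" for k
      unfolding fk_def
      by (subst has_integral_restrict) (auto intro!: integrable_integral integrable_continuous_interval cont)
    have "(\<lambda>k. integral {0..} (fk k)) \<longlonglongrightarrow> integral {0..} (\<lambda>t. E t * complex_of_real (f t))"
    proof (rule dominated_convergence(2)[OF _ hint])
      show "fk k integrable_on {0..}" for k using fk by blast
      show "norm (fk k t) \<le> h t" if "t \<in> {0..}" for k t
        using that dom[of t f] bdf c C B by (auto simp: fk_def h_def)
      show "(\<lambda>k. fk k t) \<longlonglongrightarrow> E t * complex_of_real (f t)" if "t \<in> {0..}" for t
      proof -
        obtain n where "t \<le> real n" using real_arch_simple by blast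
        hence "eventually (\<lambda>k. fk k t = E t * complex_of_real (f t)) sequentially"
          unfolding eventually_sequentially using that
          by (intro exI[of _ n]) (auto simp: fk_def)
        thus ?thesis by (rule tendsto_eventually)
      qed
    qed
    moreover have "integral {0..} (fk k) = integral {0..real k} (\<lambda>t. E t * complex_of_real (f t))" for k
      using fk by blast
    ultimately show ?thesis by (simp add: lap_def E_def)
  qed
  have ftc: "integral {0..real k} (\<lambda>t. E t * complex_of_real (g' t))
      = z * integral {0..real k} (\<lambda>t. E t * complex_of_real (g t)) + (E (real k) * complex_of_real (g (real k)) - complex_of_real (g 0))" for k
  proof -
    have der: "((\<lambda>t. E t * complex_of_real (g t)) has_vector_derivative
        (E t * complex_of_real (g' t) - z * (E t * complex_of_real (g t)))) (at t within {0..real k})" for t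
    proof -
      have e: "((\<lambda>w. exp (- z * w)) has_field_derivative (- z * exp (- z * complex_of_real t))) (at (complex_of_real t))"
        by (auto intro!: derivative_eq_intros)
      have "((\<lambda>t. E t * complex_of_real (g t)) has_vector_derivative
        (E t * complex_of_real (g' t) + (- z * exp (- z * complex_of_real t)) * complex_of_real (g t))) (at t within {0..real k})"
        unfolding E_def
        by (intro has_vector_derivative_mult has_vector_derivative_real_field[OF e]
             has_vector_derivative_of_real has_field_derivative_at_within[OF deriv])
      thus ?thesis by (simp add: E_def algebra_simps)
    qed
    have "((\<lambda>t. E t * complex_of_real (g' t) - z * (E t * complex_of_real (g t))) has_integral
         (E (real k) * complex_of_real (g (real k)) - E 0 * complex_of_real (g 0))) {0..real k}"
      by (intro fundamental_theorem_of_calculus der) auto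
    moreover have i1: "(\<lambda>t. E t * complex_of_real (g' t)) integrable_on {0..real k}"
      unfolding E_def by (intro integrable_continuous_interval continuous_intros continuous_on_subset[OF cont']) auto
    moreover have i2: "(\<lambda>t. E t * complex_of_real (g t)) integrable_on {0..real k}"
      unfolding E_def by (intro integrable_continuous_interval continuous_intros continuous_on_subset[OF contg]) auto
    ultimately have "integral {0..real k} (\<lambda>t. E t * complex_of_real (g' t)) - z * integral {0..real k} (\<lambda>t. E t * complex_of_real (g t))
        = E (real k) * complex_of_real (g (real k)) - E 0 * complex_of_real (g 0)"
      by (simp add: integral_diff[OF _ integrable_on_mult_right] integral_mult_right has_integral_iff)
    thus ?thesis by (simp add: E_def algebra_simps)
  qed
  have F0: "(\<lambda>k. E (real k) * complex_of_real (g (real k))) \<longlonglongrightarrow> 0"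
  proof (rule Lim_null_comparison)
    show "\<forall>\<^sub>F k in sequentially. norm (E (real k) * complex_of_real (g (real k))) \<le> h (real k)"
      using dom[of _ g] bd by auto
    have "(\<lambda>k. exp (- c) ^ k) \<longlonglongrightarrow> 0"
      using c by (intro LIMSEQ_power_zero) auto
    hence "(\<lambda>k. C * B * exp (- c) ^ k) \<longlonglongrightarrow> C * B * 0"
      by (intro tendsto_mult_left)
    moreover have "exp (- c) ^ k = exp (- c * real k)" for k
      by (simp add: exp_of_nat_mult[symmetric] mult.commute)
    ultimately show "(\<lambda>k. h (real k)) \<longlonglongrightarrow> 0" by (simp add: h_def)
  qed
  have "(\<lambda>k. integral {0..real k} (\<lambda>t. E t * complex_of_real (g' t))) \<longlonglongrightarrow> z * lap g z + (0 - complex_of_real (g 0))"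
    unfolding ftc by (intro tendsto_intros lim bd contg F0)
  moreover have "(\<lambda>k. integral {0..real k} (\<lambda>t. E t * complex_of_real (g' t))) \<longlonglongrightarrow> lap g' z"
    by (intro lim bd' cont')
  ultimately show ?thesis using LIMSEQ_unique by fastforce
qed

lemma abs_le_1sq: "\<bar>y::real\<bar> \<le> 1 + y\<^sup>2"
proof -
  have "0 \<le> (\<bar>y\<bar> - 1/2)\<^sup>2" by simp
  hence "0 \<le> \<bar>y\<bar>*\<bar>y\<bar> - \<bar>y\<bar> + 1/4" by (simp add: power2_eq_square algebra_simps)
  thus ?thesis by (simp add: power2_eq_square abs_mult_self_eq)
qed

lemma ode_bound:
  fixes v v' :: "real \<Rightarrow> real"
  assumes d1: "\<And>t. (v has_real_derivative v' t) (at t)"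
    and d2: "\<And>t. (v' has_real_derivative ((a - t\<^sup>2/4) * v t)) (at t)"
  shows "\<exists>C. \<forall>t\<ge>0. \<bar>v t\<bar> \<le> C*(1+t)^4 \<and> \<bar>v' t\<bar> \<le> C*(1+t)^4"
proof -
  define T0 where "T0 = 3 + 3 * \<bar>a\<bar>"
  have T0: "T0 \<ge> 3" "T0\<^sup>2 \<ge> 8 * \<bar>a\<bar>" unfolding T0_def by (auto simp: power2_eq_square algebra_simps)
  define E where "E = (\<lambda>t. (v' t)\<^sup>2 + (t\<^sup>2/4 - a) * (v t)\<^sup>2)"
  define H where "H = (\<lambda>t. E t / t^4)"
  have dE: "(E has_real_derivative (t/2) * (v t)\<^sup>2) (at t)" for t
    unfolding E_def
    by (auto intro!: derivative_eq_intros d1 d2 simp: algebra_simps power2_eq_square)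
  have qge: "t\<^sup>2/4 - a \<ge> t\<^sup>2/8" "t\<^sup>2/8 \<ge> 1" if "t \<ge> T0" for t
  proof -
    have "t\<^sup>2 \<ge> T0\<^sup>2" using that T0 by (intro power_mono) auto
    moreover have "T0 * T0 \<ge> 3 * 3" using T0 by (intro mult_mono) auto
    ultimately show "t\<^sup>2/4 - a \<ge> t\<^sup>2/8" "t\<^sup>2/8 \<ge> 1" using T0 by (auto simp: power2_eq_square)
  qed
  have Ege: "E t \<ge> (v' t)\<^sup>2" "E t \<ge> (v t)\<^sup>2" if "t \<ge> T0" for t
  proof -
    have "(t\<^sup>2/4 - a) * (v t)\<^sup>2 \<ge> 1 * (v t)\<^sup>2"
      using qge[OF that] by (intro mult_right_mono) auto
    moreover have "(v t)\<^sup>2 \<ge> 0" "(v' t)\<^sup>2 \<ge> 0" by auto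
    ultimately show "E t \<ge> (v' t)\<^sup>2" "E t \<ge> (v t)\<^sup>2" unfolding E_def by linarith+
  qed
  have Hdec: "H t \<le> H T0" if t: "t \<ge> T0" for t
  proof (rule DERIV_nonpos_imp_nonincreasing[OF t])
    fix x assume x1: "T0 \<le> x" and x2: "x \<le> t"
    have x: "T0 \<le> x \<and> x \<le> t" using x1 x2 by simp
    hence x0: "x > 0" using T0 by auto
    have "(H has_real_derivative ((x/2) * (v x)\<^sup>2 * x^4 - E x * (4 * x^3)) / (x^4)\<^sup>2) (at x)"
      unfolding H_def using x0
      by (auto intro!: derivative_eq_intros dE simp: power2_eq_square)
    moreover have num: "(x/2) * (v x)\<^sup>2 * x^4 - E x * (4 * x^3) \<le> 0"
    proof -
      have "(4 * (x\<^sup>2/8)) * (v x)\<^sup>2 \<le> (4 * (x\<^sup>2/4 - a)) * (v x)\<^sup>2"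
        using qge(1)[of x] x by (intro mult_right_mono) auto
      hence "(x\<^sup>2/2) * (v x)\<^sup>2 \<le> 4 * ((x\<^sup>2/4 - a) * (v x)\<^sup>2)" by (simp add: algebra_simps)
      hence "(x\<^sup>2/2) * (v x)\<^sup>2 \<le> 4 * E x" unfolding E_def distrib_left using zero_le_power2[of "v' x"] by linarith
      hence "((x\<^sup>2/2) * (v x)\<^sup>2) * x^3 \<le> (4 * E x) * x^3"
        using x0 by (intro mult_right_mono) auto
      thus ?thesis by (simp add: power2_eq_square power3_eq_cube power4_eq_xxxx algebra_simps)
    qed
    moreover have "((x/2) * (v x)\<^sup>2 * x^4 - E x * (4 * x^3)) / (x^4)\<^sup>2 \<le> 0"
      by (rule divide_nonpos_nonneg[OF num]) simp
    ultimately show "\<exists>y. (H has_real_derivative y) (at x) \<and> y \<le> 0"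
      by blast
  qed
  define H0 where "H0 = H T0"
  have H0: "H0 \<ge> 0"
  proof -
    have "E T0 \<ge> 0" using Ege(1)[of T0] zero_le_power2[of "v' T0"] by linarith
    thus ?thesis using T0 by (auto simp: H0_def H_def)
  qed
  have big: "\<bar>f t\<bar> \<le> (1 + H0) * (1+t)^4" if t: "t \<ge> T0" and fE: "(f t)\<^sup>2 \<le> E t" for t and f :: "real \<Rightarrow> real"
  proof -
    have t0: "t > 0" using t T0 by auto
    have "E t \<le> H0 * t^4" using Hdec[OF t] t0 by (simp add: H0_def H_def field_simps)
    have "\<bar>f t\<bar> \<le> 1 + (f t)\<^sup>2"
      by (rule abs_le_1sq)
    also have "\<dots> \<le> 1 + H0 * t^4" using fE \<open>E t \<le> H0 * t^4\<close> by auto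
    also have "\<dots> \<le> (1 + H0) * (1+t)^4"
    proof -
      have "t^4 \<le> (1+t)^4" "1 \<le> (1+t)^4" using t0 by (auto intro: power_mono one_le_power)
      thus ?thesis using H0 by (simp add: algebra_simps add_mono mult_left_mono)
    qed
    finally show ?thesis .
  qed
  have cv: "continuous_on {0..T0} v" "continuous_on {0..T0} v'"
    using d1 d2 by (auto intro!: continuous_at_imp_continuous_on DERIV_isCont)
  obtain M1 where M1: "\<And>t. t \<in> {0..T0} \<Longrightarrow> \<bar>v t\<bar> \<le> M1"
    using compact_imp_bounded[OF compact_continuous_image[OF cv(1) compact_Icc]]
    unfolding bounded_iff real_norm_def by (metis image_eqI)
  obtain M2 where M2: "\<And>t. t \<in> {0..T0} \<Longrightarrow> \<bar>v' t\<bar> \<le> M2"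
    using compact_imp_bounded[OF compact_continuous_image[OF cv(2) compact_Icc]]
    unfolding bounded_iff real_norm_def by (metis image_eqI)
  define C where "C = max (max M1 M2) (1 + H0)"
  have small: "\<bar>y\<bar> \<le> C * (1+t)^4" if "\<bar>y\<bar> \<le> C" "t \<ge> 0" for y t
  proof -
    have "C \<ge> 0" using H0 by (simp add: C_def)
    have "C * 1 \<le> C * (1+t)^4" using that \<open>C \<ge> 0\<close> by (intro mult_left_mono one_le_power) auto
    thus ?thesis using that by auto
  qed
  have "\<bar>v t\<bar> \<le> C*(1+t)^4 \<and> \<bar>v' t\<bar> \<le> C*(1+t)^4" if t: "t \<ge> 0" for t
  proof (cases "t \<le> T0")
    case True
    thus ?thesis using M1[of t] M2[of t] t by (intro conjI small) (auto simp: C_def)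
  next
    case False
    hence "\<bar>v t\<bar> \<le> (1 + H0) * (1+t)^4" "\<bar>v' t\<bar> \<le> (1 + H0) * (1+t)^4"
      using big[of t v] big[of t v'] Ege[of t] by auto
    moreover have "(1 + H0) * (1+t)^4 \<le> C * (1+t)^4" using t by (intro mult_right_mono) (auto simp: C_def)
    ultimately show ?thesis by linarith
  qed
  thus ?thesis by blast
qed


fun wg :: "real \<Rightarrow> (real \<Rightarrow> real) \<Rightarrow> (real \<Rightarrow> real) \<Rightarrow> nat \<Rightarrow> real \<Rightarrow> real" where
  "wg a v v' 0 = v"
| "wg a v v' (Suc 0) = v'"
| "wg a v v' (Suc (Suc k)) = (\<lambda>t. (a - t\<^sup>2/4) * wg a v v' k t - (real k / 2) * t * wg a v v' (k - 1) t
      - (real k * (real k - 1) / 4) * wg a v v' (k - 2) t)"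

lemma wg_deriv:
  fixes v v' :: "real \<Rightarrow> real"
  assumes d1: "\<And>t. (v has_real_derivative v' t) (at t)"
    and d2: "\<And>t. (v' has_real_derivative ((a - t\<^sup>2/4) * v t)) (at t)"
  shows "(wg a v v' k has_real_derivative wg a v v' (Suc k) t) (at t)"
proof (induction k arbitrary: t rule: less_induct)
  case (less k)
  show ?case
  proof (cases k)
    case 0 thus ?thesis using d1 by simp
  next
    case (Suc j)
    show ?thesis
    proof (cases j)
      case 0 thus ?thesis using d2 Suc by simp
    next
      case (Suc i)
      note k = \<open>k = Suc j\<close> \<open>j = Suc i\<close>
      have IH1: "\<And>t. (wg a v v' i has_real_derivative wg a v v' (Suc i) t) (at t)"
        using less k by auto
      have IH2: "\<And>t. (wg a v v' (i - Suc 0) has_real_derivative wg a v v' (Suc (i - Suc 0)) t) (at t)"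
        using less k by auto
      have IH3: "\<And>t. (wg a v v' (i - 2) has_real_derivative wg a v v' (Suc (i - 2)) t) (at t)"
        using less k by auto
      have D: "(wg a v v' (Suc (Suc i)) has_real_derivative
          (- (2 * t / 4)) * wg a v v' i t + (a - t\<^sup>2/4) * wg a v v' (Suc i) t
          - (real i / 2) * (wg a v v' (i-1) t + t * wg a v v' (Suc (i-1)) t)
          - (real i * (real i - 1) / 4) * wg a v v' (Suc (i-2)) t) (at t)"
        unfolding wg.simps(3) by (auto intro!: derivative_eq_intros IH1 IH2 IH3 simp: field_simps)
      have Q: "(- (2 * t / 4)) * wg a v v' i t + (a - t\<^sup>2/4) * wg a v v' (Suc i) t
          - (real i / 2) * (wg a v v' (i-1) t + t * wg a v v' (Suc (i-1)) t)
          - (real i * (real i - 1) / 4) * wg a v v' (Suc (i-2)) t = wg a v v' (Suc (Suc (Suc i))) t"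
      proof -
        have r: "wg a v v' (Suc (Suc (Suc i))) t = (a - t\<^sup>2/4) * wg a v v' (Suc i) t
           - (real (Suc i) / 2) * t * wg a v v' i t - (real (Suc i) * real i / 4) * wg a v v' (i - 1) t"
          by (simp only: wg.simps(3)) (simp del: wg.simps)
        show ?thesis
        proof (cases "i \<le> 1")
          case True
          hence "i = 0 \<or> i = 1" by auto
          thus ?thesis unfolding r by (elim disjE; simp del: wg.simps add: field_simps)
        next
          case False
          hence e: "Suc (i - Suc 0) = i" "Suc (i - 1) = i" "Suc (i - 2) = i - 1" by auto
          show ?thesis unfolding r by (simp del: wg.simps add: e field_simps)
        qed
      qed
      from D have "(wg a v v' (Suc (Suc i)) has_real_derivative wg a v v' (Suc (Suc (Suc i))) t) (at t)"
        unfolding Q .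
      thus ?thesis by (simp only: k)
    qed
  qed
qed

lemma wg_zero:
  fixes v v' :: "real \<Rightarrow> real"
  shows "wg a v v' (2 * s) 0 = weber_alpha a s * v 0 \<and> wg a v v' (2 * s + 1) 0 = weber_beta a s * v' 0"
proof (induction a s rule: weber_alpha.induct)
  case (1 a) thus ?case by simp
next
  case (2 a) thus ?case by (simp add: numeral_2_eq_2)
next
  case (3 a s)
  have e1: "2 * Suc (Suc s) = Suc (Suc (2 * Suc s))" "2 * Suc (Suc s) + 1 = Suc (Suc (2 * Suc s + 1))" by simp_all
  have e2: "2 * Suc s - 2 = 2 * s" "2 * Suc s + 1 - 2 = 2 * s + 1" by simp_all
  have A: "wg a v v' (2 * Suc (Suc s)) 0 = a * wg a v v' (2 * Suc s) 0 - ((2*real s + 2) * (2 * real s + 1) / 4) * wg a v v' (2 * s) 0"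
    by (simp only: e1 wg.simps e2) (simp del: wg.simps add: algebra_simps)
  have B: "wg a v v' (2 * Suc (Suc s) + 1) 0 = a * wg a v v' (2 * Suc s + 1) 0 - ((2*real s + 3) * (2 * real s + 2) / 4) * wg a v v' (2 * s + 1) 0"
    by (simp only: e1(2) wg.simps e2) (simp del: wg.simps add: algebra_simps)
  show ?case unfolding A B using 3 by (simp del: wg.simps add: field_simps)
qed

definition pb :: "(real \<Rightarrow> real) \<Rightarrow> bool" where
  "pb f \<longleftrightarrow> (\<exists>C m. \<forall>t\<ge>0. \<bar>f t\<bar> \<le> C * (1+t)^m)"

lemma pb_common:
  assumes "pb f" "pb g"
  shows "\<exists>C m. \<forall>t\<ge>0. \<bar>f t\<bar> \<le> C * (1+t)^m \<and> \<bar>g t\<bar> \<le> C * (1+t)^m"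
proof -
  obtain C1 m1 where 1: "\<And>t. t\<ge>0 \<Longrightarrow> \<bar>f t\<bar> \<le> C1 * (1+t)^m1" using assms(1) unfolding pb_def by blast
  obtain C2 m2 where 2: "\<And>t. t\<ge>0 \<Longrightarrow> \<bar>g t\<bar> \<le> C2 * (1+t)^m2" using assms(2) unfolding pb_def by blast
  have C: "C1 \<ge> 0" "C2 \<ge> 0" using 1[of 0] 2[of 0] by auto
  have "\<bar>f t\<bar> \<le> (C1+C2) * (1+t)^(m1+m2) \<and> \<bar>g t\<bar> \<le> (C1+C2) * (1+t)^(m1+m2)" if t: "t \<ge> 0" for t
  proof -
    have p: "(1+t)^m1 \<le> (1+t)^(m1+m2)" "(1+t)^m2 \<le> (1+t)^(m1+m2)"
      using t by (auto intro!: power_increasing)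
    have "C1 * (1+t)^m1 \<le> (C1+C2) * (1+t)^(m1+m2)"
      using C p t by (intro mult_mono) auto
    moreover have "C2 * (1+t)^m2 \<le> (C1+C2) * (1+t)^(m1+m2)"
      using C p t by (intro mult_mono) auto
    ultimately show ?thesis using 1[OF t] 2[OF t] by linarith
  qed
  thus ?thesis by blast
qed

lemma pb_add: "pb f \<Longrightarrow> pb g \<Longrightarrow> pb (\<lambda>t. f t + g t)"
proof -
  assume "pb f" "pb g"
  then obtain C m where b: "\<And>t. t\<ge>0 \<Longrightarrow> \<bar>f t\<bar> \<le> C * (1+t)^m \<and> \<bar>g t\<bar> \<le> C * (1+t)^m"
    using pb_common by blast
  have "\<bar>f t + g t\<bar> \<le> (2*C) * (1+t)^m" if "t \<ge> 0" for t
    using b[OF that] abs_triangle_ineq[of "f t" "g t"] by linarith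
  thus ?thesis unfolding pb_def by blast
qed

lemma pb_diff: "pb f \<Longrightarrow> pb g \<Longrightarrow> pb (\<lambda>t. f t - g t)"
proof -
  assume "pb f" "pb g"
  then obtain C m where b: "\<And>t. t\<ge>0 \<Longrightarrow> \<bar>f t\<bar> \<le> C * (1+t)^m \<and> \<bar>g t\<bar> \<le> C * (1+t)^m"
    using pb_common by blast
  have "\<bar>f t - g t\<bar> \<le> (2*C) * (1+t)^m" if "t \<ge> 0" for t
    using b[OF that] abs_triangle_ineq4[of "f t" "g t"] by linarith
  thus ?thesis unfolding pb_def by blast
qed

lemma pb_mult: "pb f \<Longrightarrow> pb g \<Longrightarrow> pb (\<lambda>t. f t * g t)"
proof -
  assume "pb f" "pb g"
  then obtain C m where b: "\<And>t. t\<ge>0 \<Longrightarrow> \<bar>f t\<bar> \<le> C * (1+t)^m \<and> \<bar>g t\<bar> \<le> C * (1+t)^m"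
    using pb_common by blast
  have "\<bar>f t * g t\<bar> \<le> (C*C) * (1+t)^(m+m)" if t: "t \<ge> 0" for t
  proof -
    have "\<bar>f t * g t\<bar> = \<bar>f t\<bar> * \<bar>g t\<bar>" by (simp add: abs_mult)
    also have "\<dots> \<le> (C * (1+t)^m) * (C * (1+t)^m)"
      using b[OF t] by (intro mult_mono) auto
    also have "\<dots> = (C*C) * (1+t)^(m+m)" by (simp add: power_add)
    finally show ?thesis .
  qed
  thus ?thesis unfolding pb_def by blast
qed

lemma pb_const: "pb (\<lambda>t. c)"
  unfolding pb_def by (intro exI[of _ "\<bar>c\<bar>"] exI[of _ 0]) auto

lemma pb_id: "pb (\<lambda>t. t)"
  unfolding pb_def by (intro exI[of _ 1] exI[of _ 1]) auto

lemma sum_split_odd: fixes N :: nat shows "(\<Sum>k<2*N+1. f k) = (\<Sum>s<N. f (2 * s)) + (\<Sum>s<N. f (2 * s+1)) + (f (2*N) :: complex)"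
proof (induction N)
  case 0 thus ?case by simp
next
  case (Suc N)
  have "(\<Sum>k<2*Suc N+1. f k) = (\<Sum>k<2*N+1. f k) + f (2*N+1) + f (2*N+2)"
    by (simp add: algebra_simps)
  thus ?case using Suc by (simp add: algebra_simps)
qed

lemma Re_ge_sin:
  fixes z :: complex
  assumes "z \<noteq> 0" "\<bar>Arg z\<bar> \<le> pi/2 - \<delta>" "\<delta> > 0"
  shows "Re z \<ge> norm z * sin \<delta>"
proof -
  have "cos (pi/2 - \<delta>) \<le> cos \<bar>Arg z\<bar>"
    using assms by (subst cos_mono_le_eq) auto
  hence "sin \<delta> \<le> cos (Arg z)" by (simp add: cos_sin_eq[of "pi/2 - \<delta>"])
  hence "sin \<delta> \<le> Re z / norm z" using cos_Arg[OF assms(1)] by simp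
  thus ?thesis using assms(1) by (simp add: field_simps)
qed

lemma pb_wg:
  assumes "pb v" "pb v'"
  shows "pb (wg a v v' k)"
proof (induction k rule: less_induct)
  case (less k)
  show ?case
  proof (cases k)
    case 0 thus ?thesis using assms by simp
  next
    case (Suc j)
    show ?thesis
    proof (cases j)
      case 0 thus ?thesis using assms Suc by simp
    next
      case (Suc i)
      have IH: "\<And>j. j < k \<Longrightarrow> pb (wg a v v' j)" using less by auto
      have e: "wg a v v' k = (\<lambda>t. ((\<lambda>t. a) t - (\<lambda>t. 1/4) t * (t * t)) * wg a v v' i t
          - ((\<lambda>t. real i / 2) t * t) * wg a v v' (i - 1) t
          - (\<lambda>t. real i * (real i - 1) / 4) t * wg a v v' (i - 2) t)"
        using \<open>k = Suc j\<close> Suc by (simp add: fun_eq_iff power2_eq_square)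
      have h: "pb (wg a v v' i)" "pb (wg a v v' (i - 1))" "pb (wg a v v' (i - 2))"
        using IH \<open>k = Suc j\<close> Suc by auto
      show ?thesis unfolding e
        by (rule pb_diff pb_mult pb_const pb_id h)+
    qed
  qed
qed

lemma lap_expand:
  fixes v v' :: "real \<Rightarrow> real"
  assumes d1: "\<And>t. (v has_real_derivative v' t) (at t)"
    and d2: "\<And>t. (v' has_real_derivative ((a - t\<^sup>2/4) * v t)) (at t)"
    and pv: "pb v" "pb v'" and z: "Re z > 0"
  shows "lap v z = (\<Sum>k<n. complex_of_real (wg a v v' k 0) / z^(k+1)) + lap (wg a v v' n) z / z^n"
proof (induction n)
  case 0 thus ?case by simp
next
  case (Suc n)
  have z0: "z \<noteq> 0" using z by auto
  obtain C m where b: "\<And>t. t\<ge>0 \<Longrightarrow> \<bar>wg a v v' n t\<bar> \<le> C * (1+t)^m \<and> \<bar>wg a v v' (Suc n) t\<bar> \<le> C * (1+t)^m"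
    using pb_common[OF pb_wg[OF pv] pb_wg[OF pv]] by blast
  have cont: "continuous_on {0..} (wg a v v' (Suc n))"
    by (intro continuous_at_imp_continuous_on ballI) (rule DERIV_isCont[OF wg_deriv[OF d1 d2]])
  have "lap (wg a v v' (Suc n)) z = z * lap (wg a v v' n) z - complex_of_real (wg a v v' n 0)"
    by (rule lap_ibp[OF wg_deriv[OF d1 d2] cont, of C m]) (use b z in auto)
  hence "lap (wg a v v' n) z = (lap (wg a v v' (Suc n)) z + complex_of_real (wg a v v' n 0)) / z"
    using z0 by (simp add: field_simps)
  hence "lap (wg a v v' n) z / z^n = complex_of_real (wg a v v' n 0) / z^(n+1) + lap (wg a v v' (Suc n)) z / z^(Suc n)"
    using z0 by (simp add: field_simps)
  thus ?case using Suc by simp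
qed

theorem theorem4p1:
  fixes a \<delta> \<sigma> :: real and w w' :: "real \<Rightarrow> real"
  assumes "is_weber_W a w w'"
    and "\<sigma> = 1 \<or> \<sigma> = -1"
    and "\<delta> > 0"
  shows "(\<forall>z::complex. Re z > 0 \<longrightarrow>
           (\<lambda>t. exp (- z * complex_of_real t) * complex_of_real (w (\<sigma> * t))) integrable_on {0..})
    \<and> (\<forall>N::nat. \<exists>C R::real. \<forall>z::complex.
          z \<noteq> 0 \<and> \<bar>Arg z\<bar> \<le> pi/2 - \<delta> \<and> norm z \<ge> R \<longrightarrow>
          norm ((weber_laplace w \<sigma> z
                - (complex_of_real (W0 a) / z) * (\<Sum>s<N. complex_of_real (weber_alpha a s) / z ^ (2 * s)))
                - complex_of_real \<sigma> * (complex_of_real (W0' a) / z\<^sup>2) *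
                    (\<Sum>s<N. complex_of_real (weber_beta a s) / z ^ (2 * s)))
            \<le> C / norm z ^ (2 * N + 1))"
proof -
  have wd1: "\<And>t. (w has_real_derivative w' t) (at t)"
    and wd2: "\<And>t. (w' has_real_derivative ((a - t\<^sup>2/4) * w t)) (at t)"
    and w00: "w 0 = W0 a" and w10: "w' 0 = W0' a"
    using assms(1) unfolding is_weber_W_def by auto
  have ss: "\<sigma> * \<sigma> = 1" using assms(2) by auto
  define v where "v = (\<lambda>t. w (\<sigma> * t))"
  define v' where "v' = (\<lambda>t. \<sigma> * w' (\<sigma> * t))"
  have d1: "(v has_real_derivative v' t) (at t)" for t
  proof -
    have "((\<lambda>t. w (\<sigma> * t)) has_real_derivative w' (\<sigma> * t) * \<sigma>) (at t)"
      by (rule DERIV_chain2[OF wd1]) (auto intro!: derivative_eq_intros)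
    thus ?thesis by (simp add: v_def v'_def mult.commute)
  qed
  have d2: "(v' has_real_derivative ((a - t\<^sup>2/4) * v t)) (at t)" for t
  proof -
    have "((\<lambda>t. w' (\<sigma> * t)) has_real_derivative ((a - (\<sigma> * t)\<^sup>2/4) * w (\<sigma> * t)) * \<sigma>) (at t)"
      by (rule DERIV_chain2[OF wd2]) (auto intro!: derivative_eq_intros)
    hence "((\<lambda>t. \<sigma> * w' (\<sigma> * t)) has_real_derivative \<sigma> * (((a - (\<sigma> * t)\<^sup>2/4) * w (\<sigma> * t)) * \<sigma>)) (at t)"
      by (rule DERIV_cmult)
    moreover have "\<sigma> * (((a - (\<sigma> * t)\<^sup>2/4) * w (\<sigma> * t)) * \<sigma>) = (a - t\<^sup>2/4) * v t"
      using assms(2) by (auto simp: v_def power2_eq_square algebra_simps)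
    ultimately show ?thesis by (simp add: v'_def)
  qed
  obtain C0 where C0: "\<And>t. t \<ge> 0 \<Longrightarrow> \<bar>v t\<bar> \<le> C0*(1+t)^4 \<and> \<bar>v' t\<bar> \<le> C0*(1+t)^4"
    using ode_bound[OF d1 d2] by blast
  have pv: "pb v" "pb v'" unfolding pb_def using C0 by blast+
  have contv: "continuous_on {0..} v"
    using d1 by (intro continuous_at_imp_continuous_on ballI DERIV_isCont) auto
  have lapv: "weber_laplace w \<sigma> z = lap v z" for z
    by (simp add: weber_laplace_def lap_def v_def)
  have part1: "\<forall>z::complex. Re z > 0 \<longrightarrow>
           (\<lambda>t. exp (- z * complex_of_real t) * complex_of_real (w (\<sigma> * t))) integrable_on {0..}"
  proof (intro allI impI)
    fix z :: complex assume z: "Re z > 0"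
    obtain K where "\<forall>z'. Re z' \<ge> Re z \<longrightarrow>
     (\<lambda>t. exp (- z' * complex_of_real t) * complex_of_real (v t)) integrable_on {0..} \<and>
     norm (integral {0..} (\<lambda>t. exp (- z' * complex_of_real t) * complex_of_real (v t))) \<le> K"
      using lap_int[OF contv, of C0 4 "Re z"] C0 z by blast
    thus "(\<lambda>t. exp (- z * complex_of_real t) * complex_of_real (w (\<sigma> * t))) integrable_on {0..}"
      by (auto simp: v_def)
  qed
  have part2: "\<exists>C R::real. \<forall>z::complex.
          z \<noteq> 0 \<and> \<bar>Arg z\<bar> \<le> pi/2 - \<delta> \<and> norm z \<ge> R \<longrightarrow>
          norm ((weber_laplace w \<sigma> z
                - (complex_of_real (W0 a) / z) * (\<Sum>s<N. complex_of_real (weber_alpha a s) / z ^ (2 * s)))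
                - complex_of_real \<sigma> * (complex_of_real (W0' a) / z\<^sup>2) *
                    (\<Sum>s<N. complex_of_real (weber_beta a s) / z ^ (2 * s)))
            \<le> C / norm z ^ (2 * N + 1)" for N
  proof (cases "\<delta> > pi/2")
    case True
    show ?thesis
    proof (intro exI allI impI)
      fix z :: complex assume "z \<noteq> 0 \<and> \<bar>Arg z\<bar> \<le> pi/2 - \<delta> \<and> norm z \<ge> 0"
      with True have False by linarith
      thus "norm ((weber_laplace w \<sigma> z
                - (complex_of_real (W0 a) / z) * (\<Sum>s<N. complex_of_real (weber_alpha a s) / z ^ (2 * s)))
                - complex_of_real \<sigma> * (complex_of_real (W0' a) / z\<^sup>2) *
                    (\<Sum>s<N. complex_of_real (weber_beta a s) / z ^ (2 * s)))
            \<le> 0 / norm z ^ (2 * N + 1)" by simp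
    qed
  next
    case False
    define n where "n = 2 * N + 1"
    define c0 where "c0 = sin \<delta>"
    have c0: "c0 > 0" unfolding c0_def using False assms(3) by (intro sin_gt_zero) auto
    obtain Cn mn where bn: "\<And>t. t\<ge>0 \<Longrightarrow> \<bar>wg a v v' n t\<bar> \<le> Cn * (1+t)^mn"
      using pb_wg[OF pv, of a n] unfolding pb_def by blast
    have contn: "continuous_on {0..} (wg a v v' n)"
      by (intro continuous_at_imp_continuous_on ballI) (rule DERIV_isCont[OF wg_deriv[OF d1 d2]])
    obtain K where K: "\<And>z. Re z \<ge> c0 \<Longrightarrow> norm (lap (wg a v v' n) z) \<le> K"
      using lap_int[OF contn bn c0] unfolding lap_def by blast
    define E where "E = complex_of_real (wg a v v' (2 * N) 0)"
    have main: "norm ((weber_laplace w \<sigma> z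
                - (complex_of_real (W0 a) / z) * (\<Sum>s<N. complex_of_real (weber_alpha a s) / z ^ (2 * s)))
                - complex_of_real \<sigma> * (complex_of_real (W0' a) / z\<^sup>2) *
                    (\<Sum>s<N. complex_of_real (weber_beta a s) / z ^ (2 * s)))
            \<le> (K + norm E) / norm z ^ (2 * N + 1)"
      if zc: "z \<noteq> 0 \<and> \<bar>Arg z\<bar> \<le> pi/2 - \<delta> \<and> norm z \<ge> 1" for z :: complex
    proof -
      from zc have z0: "z \<noteq> 0" and z1: "norm z \<ge> 1" by auto
      have "Re z \<ge> norm z * sin \<delta>" using Re_ge_sin[of z \<delta>] zc assms(3) by auto
      moreover have "norm z * sin \<delta> \<ge> 1 * sin \<delta>" using z1 c0 unfolding c0_def by (intro mult_right_mono) auto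
      ultimately have zre: "Re z \<ge> c0" unfolding c0_def by linarith
      hence zpos: "Re z > 0" using c0 by linarith
      have exp: "lap v z = (\<Sum>k<n. complex_of_real (wg a v v' k 0) / z^(k+1)) + lap (wg a v v' n) z / z^n"
        by (rule lap_expand[OF d1 d2 pv zpos])
      have v0: "v 0 = W0 a" "v' 0 = \<sigma> * W0' a" using w00 w10 by (auto simp: v_def v'_def)
      have sA: "(\<Sum>s<N. complex_of_real (wg a v v' (2 * s) 0) / z^(2 * s + 1))
          = (complex_of_real (W0 a) / z) * (\<Sum>s<N. complex_of_real (weber_alpha a s) / z ^ (2 * s))"
        unfolding sum_distrib_left
        by (intro sum.cong refl) (use z0 wg_zero[of a v v'] v0 in \<open>simp add: field_simps\<close>)
      have sB: "(\<Sum>s<N. complex_of_real (wg a v v' (2 * s + 1) 0) / z^(2 * s + 1 + 1))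
          = complex_of_real \<sigma> * (complex_of_real (W0' a) / z\<^sup>2) * (\<Sum>s<N. complex_of_real (weber_beta a s) / z ^ (2 * s))"
        unfolding sum_distrib_left
        by (intro sum.cong refl) (use z0 wg_zero[of a v v'] v0 in \<open>simp add: field_simps power2_eq_square\<close>)
      have split: "(\<Sum>k<n. complex_of_real (wg a v v' k 0) / z^(k+1))
         = (\<Sum>s<N. complex_of_real (wg a v v' (2 * s) 0) / z^(2 * s + 1))
         + (\<Sum>s<N. complex_of_real (wg a v v' (2 * s + 1) 0) / z^(2 * s + 1 + 1))
         + E / z^n"
        unfolding n_def E_def by (rule sum_split_odd)
      have eq: "(weber_laplace w \<sigma> z
                - (complex_of_real (W0 a) / z) * (\<Sum>s<N. complex_of_real (weber_alpha a s) / z ^ (2 * s)))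
                - complex_of_real \<sigma> * (complex_of_real (W0' a) / z\<^sup>2) *
                    (\<Sum>s<N. complex_of_real (weber_beta a s) / z ^ (2 * s))
             = (E + lap (wg a v v' n) z) / z^n"
        unfolding lapv exp split sA[symmetric] sB[symmetric] by (simp add: add_divide_distrib)
      have "norm (E + lap (wg a v v' n) z) \<le> K + norm E"
        using K[OF zre] norm_triangle_ineq[of E "lap (wg a v v' n) z"] by linarith
      hence "norm ((E + lap (wg a v v' n) z) / z^n) \<le> (K + norm E) / norm z ^ n"
        using z0 by (simp add: norm_divide norm_power divide_right_mono)
      hence "norm ((weber_laplace w \<sigma> z
                - (complex_of_real (W0 a) / z) * (\<Sum>s<N. complex_of_real (weber_alpha a s) / z ^ (2 * s)))
                - complex_of_real \<sigma> * (complex_of_real (W0' a) / z\<^sup>2) *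
                    (\<Sum>s<N. complex_of_real (weber_beta a s) / z ^ (2 * s)))
            \<le> (K + norm E) / norm z ^ n"
        by (simp only: eq)
      thus "norm ((weber_laplace w \<sigma> z
                - (complex_of_real (W0 a) / z) * (\<Sum>s<N. complex_of_real (weber_alpha a s) / z ^ (2 * s)))
                - complex_of_real \<sigma> * (complex_of_real (W0' a) / z\<^sup>2) *
                    (\<Sum>s<N. complex_of_real (weber_beta a s) / z ^ (2 * s)))
            \<le> (K + norm E) / norm z ^ (2 * N + 1)"
        by (simp only: n_def)
    qed
    show ?thesis using main by blast
  qed
  show ?thesis using part1 part2 by blast
qed


end
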